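(* Let $\mathfrak{C}$ be a clustering functor on $\mathcal{M}^{gen}$ that is scale invariant: for every finite metric space $(X,d_X)$ and every $\lambda>0$, $\mathfrak{C}(X,\lambda\cdot d_X)=\mathfrak{C}(X,d_X)$. Then either $\mathfrak{C}$ assigns to every finite metric space $X$ the partition of $X$ into singletons, or $\mathfrak{C}$ assigns to every finite metric space $X$ the partition with only one block.
   Context: $\mathcal{M}^{gen}$ is the category whose objects are finite metric spaces and whose morphisms $f:(X,d_X)\to(Y,d_Y)$ are distance non-increasing maps. For a set map $f:X\to Y$ and a partition $P_Y$ of $Y$, $f^*(P_Y)$ is the partition of $X$ with blocks the nonempty sets $f^{-1}(B)$, $B\in P_Y$. A clustering functor on $\mathcal{M}^{gen}$ is a rule $\mathfrak{C}$ assigning to every finite metric space $(X,d_X)$ a partition $\mathfrak{C}(X,d_X)$ of $X$ such that for every morphism $f:X\to Y$, $\mathfrak{C}(X)$ refines $f^*(\mathfrak{C}(Y))$. *)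

theory Defs
  imports Complex_Main "HOL-Library.Disjoint_Sets"
begin

text \<open>Finite metric spaces are represented by a finite carrier X :: nat set together with
  a distance function d; only the values of d on X matter.\<close>

definition finite_metric_space :: "'a set \<Rightarrow> ('a \<Rightarrow> 'a \<Rightarrow> real) \<Rightarrow> bool" where
  "finite_metric_space X d \<longleftrightarrow> finite X \<and>
     (\<forall>x\<in>X. \<forall>y\<in>X. d x y \<ge> 0 \<and> (d x y = 0 \<longleftrightarrow> x = y) \<and> d x y = d y x) \<and>
     (\<forall>x\<in>X. \<forall>y\<in>X. \<forall>z\<in>X. d x z \<le> d x y + d y z)"

definition distance_nonincreasing ::
  "'a set \<Rightarrow> ('a \<Rightarrow> 'a \<Rightarrow> real) \<Rightarrow> 'a set \<Rightarrow> ('a \<Rightarrow> 'a \<Rightarrow> real) \<Rightarrow> ('a \<Rightarrow> 'a) \<Rightarrow> bool" where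
  "distance_nonincreasing X dX Y dY f \<longleftrightarrow> f ` X \<subseteq> Y \<and>
     (\<forall>x\<in>X. \<forall>y\<in>X. dY (f x) (f y) \<le> dX x y)"

definition pullback_partition :: "'a set \<Rightarrow> ('a \<Rightarrow> 'b) \<Rightarrow> 'b set set \<Rightarrow> 'a set set" where
  "pullback_partition X f P = {X \<inter> f -` B | B. B \<in> P \<and> X \<inter> f -` B \<noteq> {}}"

definition refines :: "'a set set \<Rightarrow> 'a set set \<Rightarrow> bool" where
  "refines P Q \<longleftrightarrow> (\<forall>A\<in>P. \<exists>B\<in>Q. A \<subseteq> B)"

definition clustering_functor :: "(nat set \<Rightarrow> (nat \<Rightarrow> nat \<Rightarrow> real) \<Rightarrow> nat set set) \<Rightarrow> bool" where
  "clustering_functor C \<longleftrightarrow>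
     (\<forall>X d. finite_metric_space X d \<longrightarrow> partition_on X (C X d)) \<and>
     (\<forall>X dX Y dY f. finite_metric_space X dX \<longrightarrow> finite_metric_space Y dY \<longrightarrow>
        distance_nonincreasing X dX Y dY f \<longrightarrow>
        refines (C X dX) (pullback_partition X f (C Y dY)))"

definition scale_invariant :: "(nat set \<Rightarrow> (nat \<Rightarrow> nat \<Rightarrow> real) \<Rightarrow> nat set set) \<Rightarrow> bool" where
  "scale_invariant C \<longleftrightarrow>
     (\<forall>X d (c::real). finite_metric_space X d \<longrightarrow> c > 0 \<longrightarrow>
        C X (\<lambda>x y. c * d x y) = C X d)"

end

theory Submission
  imports Defs
begin

definition d0 :: "nat \<Rightarrow> nat \<Rightarrow> real" where
  "d0 = (\<lambda>a b. if a = b then 0 else 1)"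

lemma fms01: "c > 0 \<Longrightarrow> finite_metric_space {0,1} (\<lambda>a b. c * d0 a b)"
  unfolding finite_metric_space_def d0_def by auto

lemma part_all: "partition_on X P \<Longrightarrow> X \<noteq> {} \<Longrightarrow>
  (\<And>x y. x \<in> X \<Longrightarrow> y \<in> X \<Longrightarrow> \<exists>B\<in>P. x \<in> B \<and> y \<in> B) \<Longrightarrow> P = {X}"
proof -
  assume p: "partition_on X P" and ne: "X \<noteq> {}" and h: "\<And>x y. x \<in> X \<Longrightarrow> y \<in> X \<Longrightarrow> \<exists>B\<in>P. x \<in> B \<and> y \<in> B"
  have "A = X" if A: "A \<in> P" for A
  proof
    show "A \<subseteq> X" using p A unfolding partition_on_def by auto
    obtain a where a: "a \<in> A" using partition_onD3[OF p] A by (metis ex_in_conv)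
    have aX: "a \<in> X" using p A a unfolding partition_on_def by auto
    show "X \<subseteq> A"
    proof
      fix x assume x: "x \<in> X"
      obtain B where B: "B \<in> P" "a \<in> B" "x \<in> B" using h[OF aX x] by blast
      have "A = B" using partition_onD2[OF p] A B a by (meson disjointD disjoint_iff)
      then show "x \<in> A" using B by simp
    qed
  qed
  moreover have "P \<noteq> {}" using p ne unfolding partition_on_def by auto
  ultimately show ?thesis by blast
qed

lemma part_single: "partition_on X P \<Longrightarrow>
  (\<And>x A. x \<in> A \<Longrightarrow> A \<in> P \<Longrightarrow> A \<subseteq> {x}) \<Longrightarrow> P = {{x} | x. x \<in> X}"
proof -
  assume p: "partition_on X P" and h: "\<And>x A. x \<in> A \<Longrightarrow> A \<in> P \<Longrightarrow> A \<subseteq> {x}"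
  show ?thesis
  proof (rule set_eqI, rule iffI)
    fix A assume A: "A \<in> P"
    then obtain a where a: "a \<in> A" using partition_onD3[OF p] by (metis ex_in_conv)
    then have "A = {a}" using h[OF a A] by auto
    moreover have "a \<in> X" using p A a unfolding partition_on_def by auto
    ultimately show "A \<in> {{x} | x. x \<in> X}" by auto
  next
    fix A assume "A \<in> {{x} | x. x \<in> X}"
    then obtain x where x: "A = {x}" "x \<in> X" by auto
    then obtain B where B: "B \<in> P" "x \<in> B" using p unfolding partition_on_def by auto
    then have "B = {x}" using h[OF B(2) B(1)] by auto
    then show "A \<in> P" using B x by simp
  qed
qed

theorem mainTheorem6:
  fixes C :: "nat set \<Rightarrow> (nat \<Rightarrow> nat \<Rightarrow> real) \<Rightarrow> nat set set"
  assumes "clustering_functor C"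
    and "scale_invariant C"
  shows "(\<forall>X d. finite_metric_space X d \<longrightarrow> C X d = {{x} | x. x \<in> X})
       \<or> (\<forall>X d. finite_metric_space X d \<and> X \<noteq> {} \<longrightarrow> C X d = {X})"
proof -
  have part: "\<And>X d. finite_metric_space X d \<Longrightarrow> partition_on X (C X d)"
    using assms(1) unfolding clustering_functor_def by blast
  have func: "\<And>X dX Y dY f. finite_metric_space X dX \<Longrightarrow> finite_metric_space Y dY \<Longrightarrow>
        distance_nonincreasing X dX Y dY f \<Longrightarrow>
        refines (C X dX) (pullback_partition X f (C Y dY))"
    using assms(1) unfolding clustering_functor_def by blast
  have sc: "\<And>c. c > 0 \<Longrightarrow> C {0,1} (\<lambda>a b. c * d0 a b) = C {0,1} d0"
    using assms(2) fms01[of 1] unfolding scale_invariant_def by simp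
  have p01: "partition_on {0,1} (C {0,1} d0)" using part fms01[of 1] by simp
  show ?thesis
  proof (cases "\<exists>B\<in>C {0,1} d0. 0 \<in> B \<and> 1 \<in> B")
    case True
    then obtain B0 where B0: "B0 \<in> C {0,1} d0" "0 \<in> B0" "1 \<in> B0" by blast
    have "C X d = {X}" if fX: "finite_metric_space X d" and ne: "X \<noteq> {}" for X d
    proof (rule part_all[OF part[OF fX] ne])
      fix x y assume xy: "x \<in> X" "y \<in> X"
      show "\<exists>B\<in>C X d. x \<in> B \<and> y \<in> B"
      proof (cases "x = y")
        case True
        then show ?thesis using part[OF fX] xy unfolding partition_on_def by auto
      next
        case False
        define c where "c = d x y"
        have cpos: "c > 0" using fX xy False unfolding c_def finite_metric_space_def
          by (metis order_le_less)
        define f where "f = (\<lambda>n::nat. if n = 0 then x else y)"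
        have "distance_nonincreasing {0,1} (\<lambda>a b. c * d0 a b) X d f"
        proof -
          have e: "d x x = 0" "d y y = 0" "d y x = d x y"
            using fX xy unfolding finite_metric_space_def by auto
          show ?thesis unfolding distance_nonincreasing_def
          proof
            show "f ` {0, 1} \<subseteq> X" using xy unfolding f_def by auto
            show "\<forall>i\<in>{0,1}. \<forall>j\<in>{0,1}. d (f i) (f j) \<le> c * d0 i j"
              using e unfolding f_def d0_def c_def by auto
          qed
        qed
        from func[OF fms01[OF cpos] fX this] B0 sc[OF cpos]
        obtain B' where "B' \<in> pullback_partition {0,1} f (C X d)" "B0 \<subseteq> B'"
          unfolding refines_def by force
        then obtain B where "B \<in> C X d" "B0 \<subseteq> {0,1} \<inter> f -` B"
          unfolding pullback_partition_def by auto
        then have "f 0 \<in> B" "f 1 \<in> B" "B \<in> C X d" using B0 by blast+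
        moreover have "f 0 = x" "f 1 = y" unfolding f_def by auto
        ultimately show ?thesis by auto
      qed
    qed
    then show ?thesis by blast
  next
    case False
    have "C X d = {{x} | x. x \<in> X}" if fX: "finite_metric_space X d" for X d
    proof (rule part_single[OF part[OF fX]])
      fix x A assume xA: "x \<in> A" "A \<in> C X d"
      have AX: "A \<subseteq> X" using part[OF fX] xA unfolding partition_on_def by auto
      show "A \<subseteq> {x}"
      proof
        fix y assume yA: "y \<in> A"
        show "y \<in> {x}"
        proof (rule ccontr)
          assume yx: "y \<notin> {x}"
          have fin: "finite X" using fX unfolding finite_metric_space_def by auto
          define c where "c = Min ((\<lambda>w. d x w) ` (X - {x}))"
          have ne: "(\<lambda>w. d x w) ` (X - {x}) \<noteq> {}" using yA AX yx by auto
          have cpos: "c > 0" unfolding c_def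
          proof (subst Min_gr_iff)
            show "finite ((\<lambda>w. d x w) ` (X - {x}))" using fin by simp
            show "(\<lambda>w. d x w) ` (X - {x}) \<noteq> {}" by (rule ne)
            show "\<forall>a\<in>(\<lambda>w. d x w) ` (X - {x}). 0 < a"
              using fX xA AX unfolding finite_metric_space_def
              by (auto, metis order_le_less subsetD)
          qed
          have cle: "\<And>w. w \<in> X \<Longrightarrow> w \<noteq> x \<Longrightarrow> c \<le> d x w"
            unfolding c_def using fin by (intro Min_le) auto
          define f where "f = (\<lambda>n::nat. if n = x then (0::nat) else 1)"
          have "distance_nonincreasing X d {0,1} (\<lambda>a b. c * d0 a b) f"
            unfolding distance_nonincreasing_def
          proof
            show "f ` X \<subseteq> {0, 1}" unfolding f_def by auto
            show "\<forall>z\<in>X. \<forall>w\<in>X. c * d0 (f z) (f w) \<le> d z w"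
            proof (intro ballI)
              fix z w assume zw: "z \<in> X" "w \<in> X"
              have sym: "d z w = d w z" "d z w \<ge> 0" using fX zw unfolding finite_metric_space_def by auto
              show "c * d0 (f z) (f w) \<le> d z w"
                using cle[OF zw(2)] cle[OF zw(1)] sym unfolding f_def d0_def by auto
            qed
          qed
          from func[OF fX fms01[OF cpos] this] xA sc[OF cpos]
          obtain B' where "B' \<in> pullback_partition X f (C {0,1} d0)" "A \<subseteq> B'"
            unfolding refines_def by force
          then obtain B where "B \<in> C {0,1} d0" "A \<subseteq> X \<inter> f -` B"
            unfolding pullback_partition_def by auto
          then have "f x \<in> B" "f y \<in> B" "B \<in> C {0,1} d0" using xA yA by blast+
          moreover have "f x = 0" "f y = 1" using yx unfolding f_def by auto
          ultimately show False using False by auto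
        qed
      qed
    qed
    then show ?thesis by blast
  qed
qed

end
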